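(* Let $n\ge 2$ and let $f\colon Br_2^n\to Br_d^n$ be the homomorphism defined on generators by $f(\sigma_{i,0})=\sigma_i$ and $f(\sigma_{i,1})=\gamma_i\sigma_i\gamma_{i+1}$ for $i=1,\dots,n-1$. If $\Gamma_1,\Gamma_2\in Br_2^n$ satisfy $f(\Gamma_1)=f(\Gamma_2)$ in $Br_d^n$ (i.e. they are equal as dotted braids), then $\Gamma_1=\Gamma_2$ in $Br_2^n$.
   Context: $Br_2^n$ (the $\mathbb{Z}_2$-braid group) is the group with generators $\sigma_{i,0},\sigma_{i,1}$, $i=1,\dots,n-1$, and relations $\sigma_{i,\varepsilon}\sigma_{j,\eta}=\sigma_{j,\eta}\sigma_{i,\varepsilon}$ for all $|i-j|\ge 2$ and all $\varepsilon,\eta\in\{0,1\}$, and $\sigma_{i,\varepsilon}\sigma_{i+1,\eta}\sigma_{i,\xi}=\sigma_{i+1,\xi}\sigma_{i,\eta}\sigma_{i+1,\varepsilon}$ for $1\le i\le n-2$ and all $\varepsilon,\eta,\xi\in\{0,1\}$ with $\varepsilon+\eta+\xi\equiv 0\pmod 2$. The dotted braid group $Br_d^n$ is the group with generators $\sigma_1,\dots,\sigma_{n-1}$, $\gamma_1,\dots,\gamma_n$ and relations: $\sigma_i\sigma_j=\sigma_j\sigma_i$ for $|i-j|\ge2$; $\sigma_i\sigma_{i+1}\sigma_i=\sigma_{i+1}\sigma_i\sigma_{i+1}$ for $1\le i\le n-2$; $\gamma_i^2=e$ for $i=1,\dots,n$; $\gamma_i\gamma_j=\gamma_j\gamma_i$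 for all $i,j$; and $\gamma_i\gamma_{i+1}\sigma_i\gamma_i\gamma_{i+1}=\sigma_i$ for $i=1,\dots,n-2$. (The paper asserts that $f$ is a well-defined homomorphism.) *)

theory Defs
  imports Main
begin

text \<open>A word over a generator type 'g is a list of
letters (g, b), where b = True means the inverse letter g^-1.  Two words represent the
same element of the presented group iff they are related by the congruence generated
by free cancellation and the defining relations.\<close>

type_synonym 'g word = "('g \<times> bool) list"

definition inv_word :: "'g word \<Rightarrow> 'g word" where
  "inv_word w = rev (map (\<lambda>(g, b). (g, \<not> b)) w)"

definition pos :: "'g \<Rightarrow> 'g \<times> bool" where
  "pos g = (g, False)"

inductive pres_eq :: "('g word \<times> 'g word) set \<Rightarrow> 'g word \<Rightarrow> 'g word \<Rightarrow> bool"
  for R :: "('g word \<times> 'g word) set" where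
  refl: "pres_eq R w w"
| sym: "pres_eq R u v \<Longrightarrow> pres_eq R v u"
| trans: "pres_eq R u v \<Longrightarrow> pres_eq R v w \<Longrightarrow> pres_eq R u w"
| cancel: "pres_eq R (u @ [(g, b), (g, \<not> b)] @ v) (u @ v)"
| rel: "(l, r) \<in> R \<Longrightarrow> pres_eq R (u @ l @ v) (u @ r @ v)"

text \<open>Generators of Br_2^n: pairs (i, eps) standing for sigma_{i,eps}, 1 <= i <= n-1, eps in {0,1}.\<close>

definition gens2 :: "nat \<Rightarrow> (nat \<times> nat) set" where
  "gens2 n = {(i, e). 1 \<le> i \<and> i \<le> n - 1 \<and> e \<le> 1}"

definition br2_rels :: "nat \<Rightarrow> ((nat \<times> nat) word \<times> (nat \<times> nat) word) set" where
  "br2_rels n =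
     {([pos (i, e), pos (j, h)], [pos (j, h), pos (i, e)]) | i j e h.
        1 \<le> i \<and> i \<le> n - 1 \<and> 1 \<le> j \<and> j \<le> n - 1 \<and> (i + 2 \<le> j \<or> j + 2 \<le> i)
        \<and> e \<le> 1 \<and> h \<le> 1}
   \<union> {([pos (i, e), pos (i + 1, h), pos (i, x)], [pos (i + 1, x), pos (i, h), pos (i + 1, e)])
        | i e h x. 1 \<le> i \<and> i \<le> n - 2 \<and> e \<le> 1 \<and> h \<le> 1 \<and> x \<le> 1 \<and> even (e + h + x)}"

datatype dgen = Sig nat | Gam nat

definition brd_rels :: "nat \<Rightarrow> (dgen word \<times> dgen word) set" where
  "brd_rels n =
     {([pos (Sig i), pos (Sig j)], [pos (Sig j), pos (Sig i)]) | i j.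
        1 \<le> i \<and> i \<le> n - 1 \<and> 1 \<le> j \<and> j \<le> n - 1 \<and> (i + 2 \<le> j \<or> j + 2 \<le> i)}
   \<union> {([pos (Sig i), pos (Sig (i + 1)), pos (Sig i)],
        [pos (Sig (i + 1)), pos (Sig i), pos (Sig (i + 1))]) | i. 1 \<le> i \<and> i \<le> n - 2}
   \<union> {([pos (Gam i), pos (Gam i)], []) | i. 1 \<le> i \<and> i \<le> n}
   \<union> {([pos (Gam i), pos (Gam j)], [pos (Gam j), pos (Gam i)]) | i j.
        1 \<le> i \<and> i \<le> n \<and> 1 \<le> j \<and> j \<le> n}
   \<union> {([pos (Gam i), pos (Gam (i + 1)), pos (Sig i), pos (Gam i), pos (Gam (i + 1))],
        [pos (Sig i)]) | i. 1 \<le> i \<and> i \<le> n - 2}"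

fun f_gen :: "nat \<times> nat \<Rightarrow> dgen word" where
  "f_gen (i, e) = (if e = 0 then [pos (Sig i)]
                   else [pos (Gam i), pos (Sig i), pos (Gam (i + 1))])"

definition f_word :: "(nat \<times> nat) word \<Rightarrow> dgen word" where
  "f_word w = concat (map (\<lambda>(g, b). if b then inv_word (f_gen g) else f_gen g) w)"

end

theory Submission
  imports Defs
begin

definition lab :: "(nat \<Rightarrow> bool) \<Rightarrow> nat \<Rightarrow> nat" where
  "lab v i = (if v i = v (Suc i) then 0 else 1)"

fun step :: "dgen \<times> bool \<Rightarrow> (nat \<Rightarrow> bool) \<Rightarrow> (nat \<times> nat) word \<times> (nat \<Rightarrow> bool)" where
  "step (Gam j, b) v = ([], v(j := \<not> v j))"
| "step (Sig i, b) v = ([((i, lab v i), b)], v(i := v (Suc i), Suc i := v i))"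

fun st :: "dgen word \<Rightarrow> (nat \<Rightarrow> bool) \<Rightarrow> (nat \<Rightarrow> bool)" where
  "st [] v = v"
| "st (x # xs) v = st xs (snd (step x v))"

fun outp :: "dgen word \<Rightarrow> (nat \<Rightarrow> bool) \<Rightarrow> (nat \<times> nat) word" where
  "outp [] v = []"
| "outp (x # xs) v = fst (step x v) @ outp xs (snd (step x v))"

lemma st_append[simp]: "st (xs @ ys) v = st ys (st xs v)"
  by (induction xs arbitrary: v) auto

lemma outp_append[simp]: "outp (xs @ ys) v = outp xs v @ outp ys (st xs v)"
  by (induction xs arbitrary: v) auto

lemma pres_eq_ctx: "pres_eq R a b \<Longrightarrow> pres_eq R (x @ a @ y) (x @ b @ y)"
proof (induction rule: pres_eq.induct)
  case (refl w) then show ?case by (rule pres_eq.refl)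
next
  case (sym u v) then show ?case by (metis pres_eq.sym)
next
  case (trans u v w) then show ?case by (metis pres_eq.trans)
next
  case (cancel u g b v)
  then show ?case using pres_eq.cancel[of R "x @ u" g b "v @ y"] by simp
next
  case (rel l r u v)
  then show ?case using pres_eq.rel[of l r R "x @ u" "v @ y"] by simp
qed

definition ok :: "nat \<Rightarrow> dgen word \<Rightarrow> dgen word \<Rightarrow> bool" where
  "ok n l r = (\<forall>v. pres_eq (br2_rels n) (outp l v) (outp r v) \<and> st l v = st r v)"

lemma ok_ctx: "ok n l r \<Longrightarrow> ok n (u @ l @ w) (u @ r @ w)"
  unfolding ok_def by (auto intro: pres_eq_ctx[of _ _ _ "outp u _" "outp w _", simplified])

lemma ok_cancel: "ok n [(g, b), (g, \<not> b)] []"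
proof (cases g)
  case (Sig i)
  have C: "pres_eq (br2_rels n) [(c, b), (c, \<not> b)] []" for c
    using pres_eq.cancel[of "br2_rels n" "[]" c b "[]"] by simp
  show ?thesis using Sig unfolding ok_def
    by (auto simp: lab_def fun_eq_iff C)
next
  case (Gam j)
  then show ?thesis unfolding ok_def by (auto simp: pres_eq.refl fun_eq_iff)
qed


lemma ok_rels: "(l, r) \<in> brd_rels n \<Longrightarrow> ok n l r"
proof -
  assume "(l, r) \<in> brd_rels n"
  then consider
    (c1) i j where "l = [pos (Sig i), pos (Sig j)]" "r = [pos (Sig j), pos (Sig i)]"
        "1 \<le> i \<and> i \<le> n - 1 \<and> 1 \<le> j \<and> j \<le> n - 1 \<and> (i + 2 \<le> j \<or> j + 2 \<le> i)"
  | (c2) i where "l = [pos (Sig i), pos (Sig (i + 1)), pos (Sig i)]"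
        "r = [pos (Sig (i + 1)), pos (Sig i), pos (Sig (i + 1))]" "1 \<le> i \<and> i \<le> n - 2"
  | (c3) i where "l = [pos (Gam i), pos (Gam i)]" "r = []"
  | (c4) i j where "l = [pos (Gam i), pos (Gam j)]" "r = [pos (Gam j), pos (Gam i)]"
  | (c5) i where "l = [pos (Gam i), pos (Gam (i + 1)), pos (Sig i), pos (Gam i), pos (Gam (i + 1))]"
        "r = [pos (Sig i)]"
    unfolding brd_rels_def by blast
  then show ?thesis
  proof cases
    case c1
    show ?thesis unfolding ok_def
    proof
      fix v
      have la: "lab (v(i := v (Suc i), Suc i := v i)) j = lab v j"
        "lab (v(j := v (Suc j), Suc j := v j)) i = lab v i"
        using c1(3) by (auto simp: lab_def)
      have "([pos (i, lab v i), pos (j, lab v j)], [pos (j, lab v j), pos (i, lab v i)]) \<in> br2_rels n"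
        using c1(3) unfolding br2_rels_def by (auto simp: lab_def)
      from pres_eq.rel[OF this, of "[]" "[]"]
      have "pres_eq (br2_rels n) [pos (i, lab v i), pos (j, lab v j)] [pos (j, lab v j), pos (i, lab v i)]"
        by simp
      then show "pres_eq (br2_rels n) (outp l v) (outp r v) \<and> st l v = st r v"
        using c1 la by (auto simp: pos_def fun_eq_iff)
    qed
  next
    case c2
    show ?thesis unfolding ok_def
    proof
      fix v
      define a :: bool where "a = v i"
      define b :: bool where "b = v (Suc i)"
      define c :: bool where "c = v (Suc (Suc i))"
      define L where "L = (\<lambda>x y :: bool. if x = y then 0 else (1::nat))"
      have "([pos (i, L a b), pos (i + 1, L a c), pos (i, L b c)],
             [pos (i + 1, L b c), pos (i, L a c), pos (i + 1, L a b)]) \<in> br2_rels n"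
        using c2(3) unfolding br2_rels_def L_def by (auto split: if_splits)
      from pres_eq.rel[OF this, of "[]" "[]"]
      have P: "pres_eq (br2_rels n) [pos (i, L a b), pos (i + 1, L a c), pos (i, L b c)]
             [pos (i + 1, L b c), pos (i, L a c), pos (i + 1, L a b)]" by simp
      have "outp l v = [pos (i, L a b), pos (i + 1, L a c), pos (i, L b c)]"
        using c2 by (simp add: pos_def lab_def L_def a_def b_def c_def)
      moreover have "outp r v = [pos (i + 1, L b c), pos (i, L a c), pos (i + 1, L a b)]"
        using c2 by (simp add: pos_def lab_def L_def a_def b_def c_def)
      moreover have "st l v = st r v"
        using c2 by (simp add: pos_def fun_eq_iff)
      ultimately show "pres_eq (br2_rels n) (outp l v) (outp r v) \<and> st l v = st r v"
        using P by simp
    qed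
  next
    case c3
    then show ?thesis unfolding ok_def by (auto simp: pos_def fun_eq_iff pres_eq.refl)
  next
    case c4
    then show ?thesis unfolding ok_def by (auto simp: pos_def fun_eq_iff pres_eq.refl)
  next
    case c5
    then show ?thesis unfolding ok_def by (auto simp: pos_def fun_eq_iff pres_eq.refl lab_def)
  qed
qed

lemma ok_inv: "pres_eq (brd_rels n) a b \<Longrightarrow> ok n a b"
proof (induction rule: pres_eq.induct)
  case (refl w) then show ?case by (simp add: ok_def pres_eq.refl)
next
  case (sym u v) then show ?case by (auto simp: ok_def intro: pres_eq.sym)
next
  case (trans u v w) then show ?case by (auto simp: ok_def intro: pres_eq.trans)
next
  case (cancel u g b v)
  then show ?case using ok_ctx[OF ok_cancel[of n g b], of u v] by simp
next
  case (rel l r u v)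
  then show ?case using ok_ctx[OF ok_rels] by blast
qed

lemma f_word_Cons: "f_word (x # xs) = (case x of (g, b) \<Rightarrow> if b then inv_word (f_gen g) else f_gen g) @ f_word xs"
  by (simp add: f_word_def)

lemma f_word_run:
  assumes "fst ` set w \<subseteq> gens2 n"
  shows "outp (f_word w) (\<lambda>_. False) = w \<and> st (f_word w) (\<lambda>_. False) = (\<lambda>_. False)"
  using assms
proof (induction w)
  case Nil then show ?case by (simp add: f_word_def)
next
  case (Cons x xs)
  obtain i e b where x: "x = ((i, e), b)" by (metis prod.exhaust)
  have e: "e = 0 \<or> e = 1" using Cons.prems x by (auto simp: gens2_def)
  have IH: "outp (f_word xs) (\<lambda>_. False) = xs \<and> st (f_word xs) (\<lambda>_. False) = (\<lambda>_. False)"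
    using Cons by auto
  have "outp (if b then inv_word (f_gen (i, e)) else f_gen (i, e)) (\<lambda>_. False) = [x] \<and>
        st (if b then inv_word (f_gen (i, e)) else f_gen (i, e)) (\<lambda>_. False) = (\<lambda>_. False)"
    using e x by (auto simp: inv_word_def pos_def lab_def fun_eq_iff)
  then show ?case using IH x by (simp add: f_word_Cons)
qed

theorem theorem3:
  fixes n :: nat and w1 w2 :: "(nat \<times> nat) word"
  assumes "n \<ge> 2"
    and "fst ` set w1 \<subseteq> gens2 n" and "fst ` set w2 \<subseteq> gens2 n"
    and "pres_eq (brd_rels n) (f_word w1) (f_word w2)"
  shows "pres_eq (br2_rels n) w1 w2"
proof -
  have "ok n (f_word w1) (f_word w2)" using assms(4) by (rule ok_inv)
  then have "pres_eq (br2_rels n) (outp (f_word w1) (\<lambda>_. False)) (outp (f_word w2) (\<lambda>_. False))"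
    unfolding ok_def by blast
  then show ?thesis using f_word_run[OF assms(2)] f_word_run[OF assms(3)] by simp
qed

end
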